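(* Let $\mathcal{D}=(V,E)$ be a DAG with $n=|V|$ nodes, and let $\mathcal{U}$ be its unconditional dependence graph. Then $\mathcal{U}$ is equal to each of the following undirected graphs on $V$: (1) $\mathcal{U}_1=(V,\{\{v,w\}: v\neq w,\ \mathrm{an}_\mathcal{D}(v)\cap\mathrm{an}_\mathcal{D}(w)\neq\emptyset\})$, i.e. two distinct nodes are adjacent iff they have a common ancestor in $\mathcal{D}$; (2) $\mathcal{U}_2=\big(V,\bigcup_{m\in\mathrm{ma}_\mathcal{D}(V)}\{\{v,w\}: v,w\in\mathrm{de}_\mathcal{D}(m),\ v\neq w\}\big)$; (3) $\mathcal{U}_3=m(t(r(\mathcal{D})))$; (4) the graph $\mathcal{U}_4$ whose adjacency matrix is $a(T^\top T)$, where $T=\sum_{p=0}^{n-1}A_\mathcal{D}^p$.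
   Context: A DAG $\mathcal{D}=(V,E)$ has adjacency matrix $A_\mathcal{D}=[a_{v,w}]$ with $a_{v,w}=1$ iff $v\to w\in E$, else $0$ (identify $V$ with $[n]$). $\mathrm{an}_\mathcal{D}(v)$ and $\mathrm{de}_\mathcal{D}(v)$ denote the ancestors/descendants of $v$ (nodes with a directed path to/from $v$), with $v\in\mathrm{an}_\mathcal{D}(v)$ and $v\in\mathrm{de}_\mathcal{D}(v)$. $\mathrm{ma}_\mathcal{D}(V)$ is the set of source nodes of $\mathcal{D}$ (nodes with no parents). A collider on a path is a node $u$ with both incident path edges pointing into $u$; a trek is a path (no repeated vertices) with no collider. The unconditional dependence graph $\mathcal{U}^\mathcal{D}$ of $\mathcal{D}$ is the undirected graph on $V$ in which distinct $v,w$ are adjacent iff there is a trek between $v$ and $w$ in $\mathcal{D}$ (i.e. $v,w$ are d-connected given $\emptyset$). Operators: $r(\mathcal{D})$ reverses every edge of $\mathcal{D}$; $t(\mathcal{D})$ is the transitive closure (add $v\to w$ whenever there is a directed path from $v$ to $w$); $m(\mathcal{D})$ (moralization) adds an edge between every pair of nonadjacent nodes having a common child and then makes all edges undirected. For a symmetric matrix $M$, $a(M)$ is the $0/1$ matrix with $a(M)_{v,w}=1$ iff $v\neq w$ and $M_{v,w}\neq 0$. *)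

theory Defs
  imports Complex_Main
begin

text \<open>A DAG on the vertex set V = {0..<n} is given by its edge relation
  E :: (nat \<times> nat) set with E \<subseteq> V \<times> V and acyclic E.
  Undirected graphs on V are represented by their edge sets, i.e. sets of
  two-element subsets of V.\<close>

definition adjacent :: "(nat \<times> nat) set \<Rightarrow> nat \<Rightarrow> nat \<Rightarrow> bool" where
  "adjacent E u v \<longleftrightarrow> (u, v) \<in> E \<or> (v, u) \<in> E"

definition is_path :: "(nat \<times> nat) set \<Rightarrow> nat list \<Rightarrow> bool" where
  "is_path E xs \<longleftrightarrow> xs \<noteq> [] \<and> distinct xs \<and>
     (\<forall>i. Suc i < length xs \<longrightarrow> adjacent E (xs ! i) (xs ! Suc i))"

definition is_collider :: "(nat \<times> nat) set \<Rightarrow> nat list \<Rightarrow> nat \<Rightarrow> bool" where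
  "is_collider E xs i \<longleftrightarrow> 0 < i \<and> Suc i < length xs \<and>
     (xs ! (i - 1), xs ! i) \<in> E \<and> (xs ! Suc i, xs ! i) \<in> E"

definition is_trek :: "(nat \<times> nat) set \<Rightarrow> nat list \<Rightarrow> bool" where
  "is_trek E xs \<longleftrightarrow> is_path E xs \<and> (\<forall>i. \<not> is_collider E xs i)"

definition trek_between :: "(nat \<times> nat) set \<Rightarrow> nat \<Rightarrow> nat \<Rightarrow> bool" where
  "trek_between E v w \<longleftrightarrow> (\<exists>xs. is_trek E xs \<and> hd xs = v \<and> last xs = w)"

definition an :: "(nat \<times> nat) set \<Rightarrow> nat \<Rightarrow> nat set" where
  "an E v = {u. (u, v) \<in> E\<^sup>*}"

definition de :: "(nat \<times> nat) set \<Rightarrow> nat \<Rightarrow> nat set" where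
  "de E v = {u. (v, u) \<in> E\<^sup>*}"

definition ma :: "(nat \<times> nat) set \<Rightarrow> nat set \<Rightarrow> nat set" where
  "ma E V = {v \<in> V. \<not> (\<exists>u. (u, v) \<in> E)}"

definition udg :: "nat \<Rightarrow> (nat \<times> nat) set \<Rightarrow> nat set set" where
  "udg n E = {{v, w} | v w. v < n \<and> w < n \<and> v \<noteq> w \<and> trek_between E v w}"

definition U1 :: "nat \<Rightarrow> (nat \<times> nat) set \<Rightarrow> nat set set" where
  "U1 n E = {{v, w} | v w. v < n \<and> w < n \<and> v \<noteq> w \<and> an E v \<inter> an E w \<noteq> {}}"

definition U2 :: "nat \<Rightarrow> (nat \<times> nat) set \<Rightarrow> nat set set" where
  "U2 n E = (\<Union>m \<in> ma E {0..<n}. {{v, w} | v w. v \<in> de E m \<and> w \<in> de E m \<and> v \<noteq> w})"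

definition rev_graph :: "(nat \<times> nat) set \<Rightarrow> (nat \<times> nat) set" where
  "rev_graph E = E\<inverse>"

definition tc_graph :: "(nat \<times> nat) set \<Rightarrow> (nat \<times> nat) set" where
  "tc_graph E = E\<^sup>+"

definition moral :: "(nat \<times> nat) set \<Rightarrow> nat set set" where
  "moral E = {{v, w} | v w. adjacent E v w \<or>
       (v \<noteq> w \<and> \<not> adjacent E v w \<and> (\<exists>c. (v, c) \<in> E \<and> (w, c) \<in> E))}"

definition U3 :: "(nat \<times> nat) set \<Rightarrow> nat set set" where
  "U3 E = moral (tc_graph (rev_graph E))"

text \<open>Matrices as functions nat \<Rightarrow> nat \<Rightarrow> real, indexed by {0..<n}.\<close>
definition adj_matrix :: "(nat \<times> nat) set \<Rightarrow> nat \<Rightarrow> nat \<Rightarrow> real" where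
  "adj_matrix E v w = (if (v, w) \<in> E then 1 else 0)"

definition mmult :: "nat \<Rightarrow> (nat \<Rightarrow> nat \<Rightarrow> real) \<Rightarrow> (nat \<Rightarrow> nat \<Rightarrow> real) \<Rightarrow> nat \<Rightarrow> nat \<Rightarrow> real" where
  "mmult n A B i j = (\<Sum>k<n. A i k * B k j)"

definition mtranspose :: "(nat \<Rightarrow> nat \<Rightarrow> real) \<Rightarrow> nat \<Rightarrow> nat \<Rightarrow> real" where
  "mtranspose A i j = A j i"

fun mpow :: "nat \<Rightarrow> (nat \<Rightarrow> nat \<Rightarrow> real) \<Rightarrow> nat \<Rightarrow> nat \<Rightarrow> nat \<Rightarrow> real" where
  "mpow n A 0 = (\<lambda>i j. if i = j then 1 else 0)"
| "mpow n A (Suc p) = mmult n (mpow n A p) A"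

definition Tmat :: "nat \<Rightarrow> (nat \<times> nat) set \<Rightarrow> nat \<Rightarrow> nat \<Rightarrow> real" where
  "Tmat n E i j = (\<Sum>p<n. mpow n (adj_matrix E) p i j)"

definition amat :: "(nat \<Rightarrow> nat \<Rightarrow> real) \<Rightarrow> nat \<Rightarrow> nat \<Rightarrow> real" where
  "amat M v w = (if v \<noteq> w \<and> M v w \<noteq> 0 then 1 else 0)"

definition graph_of_matrix :: "nat \<Rightarrow> (nat \<Rightarrow> nat \<Rightarrow> real) \<Rightarrow> nat set set" where
  "graph_of_matrix n M = {{v, w} | v w. v < n \<and> w < n \<and> M v w = 1}"

definition U4 :: "nat \<Rightarrow> (nat \<times> nat) set \<Rightarrow> nat set set" where
  "U4 n E = graph_of_matrix n
     (amat (mmult n (mtranspose (Tmat n E)) (Tmat n E)))"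

end

theory Submission
  imports Defs
begin

lemma chain_trancl:
  assumes "\<forall>k<n. (f k, f (Suc k)) \<in> R" "i < j" "j \<le> n"
  shows "(f i, f j) \<in> R\<^sup>+"
  using assms(2,3)
proof (induction j)
  case 0 then show ?case by simp
next
  case (Suc j)
  show ?case
  proof (cases "i = j")
    case True then show ?thesis using assms(1) Suc.prems by auto
  next
    case False
    then have "(f i, f j) \<in> R\<^sup>+" using Suc by auto
    moreover have "(f j, f (Suc j)) \<in> R" using assms(1) Suc.prems by auto
    ultimately show ?thesis by auto
  qed
qed

lemma chain_inj:
  assumes "acyclic R" "\<forall>k<n. (f k, f (Suc k)) \<in> R"
  shows "inj_on f {0..n}"
proof (rule inj_onI)
  fix i j assume ij: "i \<in> {0..n}" "j \<in> {0..n}" "f i = f j"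
  show "i = j"
  proof (rule ccontr)
    assume "i \<noteq> j"
    then consider "i < j" | "j < i" by linarith
    then show False
    proof cases
      case 1
      have "(f i, f j) \<in> R\<^sup>+" using chain_trancl[OF assms(2) 1] ij(2) by auto
      then show False using ij assms(1) unfolding acyclic_def by auto
    next
      case 2
      have "(f j, f i) \<in> R\<^sup>+" using chain_trancl[OF assms(2) 2] ij(1) by auto
      then show False using ij assms(1) unfolding acyclic_def by auto
    qed
  qed
qed

lemma two_cycle: "acyclic E \<Longrightarrow> (x,y) \<in> E \<Longrightarrow> (y,x) \<in> E \<Longrightarrow> False"
  unfolding acyclic_def by (meson trancl.r_into_trancl trancl_into_trancl)

lemma rtrancl_short:
  assumes E: "E \<subseteq> {0..<n} \<times> {0..<n}" and ac: "acyclic E" and i: "i < n" and ij: "(i,j) \<in> E\<^sup>*"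
  shows "\<exists>p<n. (i,j) \<in> E ^^ p"
proof -
  obtain p where p: "(i,j) \<in> E ^^ p" using ij rtrancl_power by blast
  then obtain f where f: "f 0 = i" "f p = j" "\<forall>k<p. (f k, f (Suc k)) \<in> E"
    using relpow_fun_conv by metis
  have inj: "inj_on f {0..p}" using chain_inj[OF ac f(3)] .
  have sub: "f ` {0..p} \<subseteq> {0..<n}"
  proof
    fix y assume "y \<in> f ` {0..p}"
    then obtain k where k: "k \<le> p" "y = f k" by auto
    show "y \<in> {0..<n}"
    proof (cases k)
      case 0 then show ?thesis using k f i by auto
    next
      case (Suc k') then have "(f k', f k) \<in> E" using f(3) k by auto
      then show ?thesis using E k by auto
    qed
  qed
  have "card (f ` {0..p}) = Suc p" using card_image[OF inj] by simp
  moreover have "card (f ` {0..p}) \<le> n" using card_mono[OF _ sub] by simp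
  ultimately have "p < n" by simp
  then show ?thesis using p by blast
qed

lemma mpow_nonneg: "mpow n (adj_matrix E) p i j \<ge> 0"
  by (induction p arbitrary: j) (auto simp: mmult_def adj_matrix_def intro!: sum_nonneg)

lemma adj_nz: "adj_matrix E k j \<noteq> 0 \<longleftrightarrow> (k,j) \<in> E"
  by (simp add: adj_matrix_def)

lemma mpow_pos:
  assumes E: "E \<subseteq> {0..<n} \<times> {0..<n}"
  shows "mpow n (adj_matrix E) p i j \<noteq> 0 \<longleftrightarrow> (i,j) \<in> E ^^ p"
proof (induction p arbitrary: j)
  case 0 then show ?case by auto
next
  case (Suc p)
  have "mpow n (adj_matrix E) (Suc p) i j = (\<Sum>k<n. mpow n (adj_matrix E) p i k * adj_matrix E k j)"
    by (simp add: mmult_def)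
  also have "\<dots> \<noteq> 0 \<longleftrightarrow> (\<exists>k<n. mpow n (adj_matrix E) p i k * adj_matrix E k j \<noteq> 0)"
    by (subst sum_nonneg_eq_0_iff) (auto simp: adj_matrix_def mpow_nonneg)
  also have "\<dots> \<longleftrightarrow> (\<exists>k<n. (i,k) \<in> E^^p \<and> (k,j) \<in> E)"
    by (simp only: mult_eq_0_iff de_Morgan_disj adj_nz Suc.IH)
  also have "\<dots> \<longleftrightarrow> (i,j) \<in> E^^Suc p"
  proof
    assume "\<exists>k<n. (i,k) \<in> E^^p \<and> (k,j) \<in> E"
    then show "(i,j) \<in> E^^Suc p" by auto
  next
    assume "(i,j) \<in> E^^Suc p"
    then obtain y where y: "(i,y) \<in> E^^p" "(y,j) \<in> E" by auto
    have "y < n" using E y(2) by auto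
    then show "\<exists>k<n. (i,k) \<in> E^^p \<and> (k,j) \<in> E" using y by blast
  qed
  finally show ?case .
qed

lemma Tmat_nonneg: "Tmat n E i j \<ge> 0"
  unfolding Tmat_def by (auto intro!: sum_nonneg simp: mpow_nonneg)

lemma Tmat_pos:
  assumes E: "E \<subseteq> {0..<n} \<times> {0..<n}" and ac: "acyclic E" and i: "i < n"
  shows "Tmat n E i j \<noteq> 0 \<longleftrightarrow> (i,j) \<in> E\<^sup>*"
proof -
  have "Tmat n E i j \<noteq> 0 \<longleftrightarrow> (\<exists>p<n. mpow n (adj_matrix E) p i j \<noteq> 0)"
    unfolding Tmat_def by (subst sum_nonneg_eq_0_iff) (auto simp: mpow_nonneg)
  also have "\<dots> \<longleftrightarrow> (\<exists>p<n. (i,j) \<in> E ^^ p)" using mpow_pos[OF E] by auto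
  also have "\<dots> \<longleftrightarrow> (i,j) \<in> E\<^sup>*"
    using rtrancl_short[OF E ac i] rtrancl_power by blast
  finally show ?thesis .
qed


lemma walk_nocoll_anc:
  "xs \<noteq> [] \<Longrightarrow> (\<forall>i. Suc i < length xs \<longrightarrow> adjacent E (xs ! i) (xs ! Suc i)) \<Longrightarrow>
   (\<forall>i. \<not> is_collider E xs i) \<Longrightarrow>
   \<exists>c. (c, hd xs) \<in> E\<^sup>* \<and> (c, last xs) \<in> E\<^sup>* \<and> (c = hd xs \<or> (Suc 0 < length xs \<and> (xs ! Suc 0, xs ! 0) \<in> E))"
proof (induction xs)
  case Nil then show ?case by simp
next
  case (Cons x xs)
  show ?case
  proof (cases "xs = []")
    case True then show ?thesis by auto
  next
    case False
    then obtain y rest where xs: "xs = y # rest" by (cases xs) auto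
    have adj: "\<forall>i. Suc i < length xs \<longrightarrow> adjacent E (xs ! i) (xs ! Suc i)"
    proof (intro allI impI)
      fix i assume "Suc i < length xs"
      then show "adjacent E (xs ! i) (xs ! Suc i)"
        using Cons.prems(2)[rule_format, of "Suc i"] by simp
    qed
    have nc: "\<forall>i. \<not> is_collider E xs i"
    proof
      fix i show "\<not> is_collider E xs i"
        using Cons.prems(3)[rule_format, of "Suc i"] by (cases i) (auto simp: is_collider_def)
    qed
    obtain c where c: "(c, y) \<in> E\<^sup>*" "(c, last xs) \<in> E\<^sup>*"
        "c = y \<or> (Suc 0 < length xs \<and> (xs ! Suc 0, y) \<in> E)"
      using Cons.IH[OF False adj nc] xs by auto
    have lastx: "last (x # xs) = last xs" using xs by simp
    have axy: "adjacent E x y" using Cons.prems(2)[rule_format, of 0] xs by simp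
    show ?thesis
    proof (cases "(y, x) \<in> E")
      case True
      have "(c, x) \<in> E\<^sup>*" using c(1) True by (rule rtrancl_into_rtrancl)
      then show ?thesis using c lastx xs True by auto
    next
      case False
      then have xy: "(x,y) \<in> E" using axy adjacent_def by auto
      have "c = y"
      proof (rule ccontr)
        assume "c \<noteq> y"
        then have "Suc 0 < length xs" "(xs ! Suc 0, y) \<in> E" using c by auto
        then have "is_collider E (x#xs) (Suc 0)" using xy xs by (auto simp: is_collider_def)
        then show False using Cons.prems(3) by blast
      qed
      then have "(x, last xs) \<in> E\<^sup>*" using c(2) xy by (auto intro: converse_rtrancl_into_rtrancl)
      then show ?thesis using lastx by auto
    qed
  qed
qed

lemma trek_anc: "trek_between E v w \<Longrightarrow> \<exists>c. (c, v) \<in> E\<^sup>* \<and> (c, w) \<in> E\<^sup>*"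
  unfolding trek_between_def is_trek_def is_path_def
  using walk_nocoll_anc by blast


lemma common_anc_trek:
  assumes ac: "acyclic E" and cv: "(c, v) \<in> E\<^sup>*" and cw: "(c, w) \<in> E\<^sup>*"
  shows "trek_between E v w"
proof -
  define P where "P N \<longleftrightarrow> (\<exists>c a b f g. a + b = N \<and> f 0 = c \<and> f a = v \<and> (\<forall>k<a. (f k, f (Suc k)) \<in> E)
       \<and> g 0 = c \<and> g b = w \<and> (\<forall>k<b. (g k, g (Suc k)) \<in> E))" for N
  obtain a0 where "(c,v) \<in> E^^a0" using cv rtrancl_power by blast
  then obtain f0 where f0: "f0 0 = c" "f0 a0 = v" "\<forall>k<a0. (f0 k, f0 (Suc k)) \<in> E"
    using relpow_fun_conv by metis
  obtain b0 where "(c,w) \<in> E^^b0" using cw rtrancl_power by blast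
  then obtain g0 where g0: "g0 0 = c" "g0 b0 = w" "\<forall>k<b0. (g0 k, g0 (Suc k)) \<in> E"
    using relpow_fun_conv by metis
  have "P (a0 + b0)" unfolding P_def using f0 g0 by blast
  define N where "N = (LEAST N. P N)"
  have PN: "P N" unfolding N_def using \<open>P (a0+b0)\<close> by (rule LeastI)
  have min: "\<And>M. P M \<Longrightarrow> N \<le> M" unfolding N_def by (rule Least_le)
  obtain c a b f g where ab: "a + b = N" and f: "f 0 = c" "f a = v" "\<forall>k<a. (f k, f (Suc k)) \<in> E"
    and g: "g 0 = c" "g b = w" "\<forall>k<b. (g k, g (Suc k)) \<in> E"
    using PN unfolding P_def by blast
  have disj: "i = 0 \<and> j = 0" if ij: "i \<le> a" "j \<le> b" "f i = g j" for i j
  proof (rule ccontr)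
    assume nz: "\<not> (i = 0 \<and> j = 0)"
    consider "i = 0" "0 < j" | "0 < i" "j = 0" | "0 < i" "0 < j" using nz by blast
    then show False
    proof cases
      case 1
      then have "(g 0, g j) \<in> E\<^sup>+" using chain_trancl[OF g(3)] ij by blast
      then show False using ij 1 f g ac unfolding acyclic_def by auto
    next
      case 2
      then have "(f 0, f i) \<in> E\<^sup>+" using chain_trancl[OF f(3)] ij by blast
      then show False using ij 2 f g ac unfolding acyclic_def by auto
    next
      case 3
      have "P ((a - i) + (b - j))" unfolding P_def
        apply (rule exI[of _ "f i"], rule exI[of _ "a - i"], rule exI[of _ "b - j"],
               rule exI[of _ "\<lambda>k. f (k + i)"], rule exI[of _ "\<lambda>k. g (k + j)"])
        using ij f g by auto
      then have "N \<le> (a - i) + (b - j)" by (rule min)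
      then show False using 3 ab ij by linarith
    qed
  qed
  have injf: "inj_on f {0..a}" using chain_inj[OF ac f(3)] .
  have injg: "inj_on g {0..b}" using chain_inj[OF ac g(3)] .
  define h where "h k = (if k \<le> a then f (a - k) else g (k - a))" for k
  have hg: "h k = g (k - a)" if "a \<le> k" for k
    using that f(1) g(1) unfolding h_def by auto
  have bkw: "(h (Suc k), h k) \<in> E" if "k < a" for k
  proof -
    have "a - k = Suc (a - Suc k)" using that by simp
    then show ?thesis using f(3)[rule_format, of "a - Suc k"] that unfolding h_def by auto
  qed
  have fwd: "(h k, h (Suc k)) \<in> E" if "a \<le> k" "k < a + b" for k
  proof -
    have "Suc k - a = Suc (k - a)" using that by simp
    then show ?thesis using g(3)[rule_format, of "k - a"] that hg[of k] hg[of "Suc k"] by auto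
  qed
  define xs where "xs = map h [0..<Suc (a+b)]"
  have len: "length xs = Suc (a+b)" unfolding xs_def by simp
  have nth: "xs ! k = h k" if "k < Suc (a+b)" for k
    using that unfolding xs_def by (simp del: upt_Suc)
  have injh: "inj_on h {0..<Suc (a+b)}"
  proof (rule inj_onI)
    fix k1 k2 assume k: "k1 \<in> {0..<Suc (a+b)}" "k2 \<in> {0..<Suc (a+b)}" "h k1 = h k2"
    consider "k1 \<le> a" "k2 \<le> a" | "a < k1" "a < k2" | "k1 \<le> a" "a < k2" | "a < k1" "k2 \<le> a"
      by linarith
    then show "k1 = k2"
    proof cases
      case 1
      then have "f (a - k1) = f (a - k2)" using k unfolding h_def by auto
      then have "a - k1 = a - k2" using injf by (auto dest: inj_onD)
      then show ?thesis using 1 by linarith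
    next
      case 2
      then have "g (k1 - a) = g (k2 - a)" using k unfolding h_def by auto
      then have "k1 - a = k2 - a" using injg k by (auto dest: inj_onD)
      then show ?thesis using 2 by linarith
    next
      case 3
      then have "f (a - k1) = g (k2 - a)" using k unfolding h_def by auto
      then have "k2 - a = 0" using disj[of "a - k1" "k2 - a"] k by auto
      then show ?thesis using 3 by linarith
    next
      case 4
      then have "f (a - k2) = g (k1 - a)" using k unfolding h_def by auto
      then have "k1 - a = 0" using disj[of "a - k2" "k1 - a"] k by auto
      then show ?thesis using 4 by linarith
    qed
  qed
  have "is_trek E xs"
    unfolding is_trek_def is_path_def
  proof (intro conjI allI impI)
    show "xs \<noteq> []" using len by auto
    show "distinct xs"
    proof -
      have "distinct [0..<Suc (a+b)]" by (rule distinct_upt)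
      moreover have "inj_on h (set [0..<Suc (a+b)])" unfolding set_upt by (rule injh)
      ultimately show ?thesis unfolding xs_def distinct_map by (rule conjI)
    qed
  next
    fix i assume i: "Suc i < length xs"
    have n1: "xs ! i = h i" using nth[of i] i len by simp
    have n2: "xs ! Suc i = h (Suc i)" using nth[of "Suc i"] i len by simp
    show "adjacent E (xs ! i) (xs ! Suc i)"
    proof (cases "i < a")
      case True then show ?thesis using bkw[of i] unfolding n1 n2 adjacent_def by blast
    next
      case False
      have "i < a + b" using i len by simp
      then show ?thesis using fwd[of i] False unfolding n1 n2 adjacent_def by simp
    qed
  next
    fix i show "\<not> is_collider E xs i"
    proof
      assume col: "is_collider E xs i"
      then have i: "0 < i" "Suc i < length xs" "(xs ! (i - 1), xs ! i) \<in> E" "(xs ! Suc i, xs ! i) \<in> E"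
        unfolding is_collider_def by auto
      have "xs ! (i - 1) = h (i - 1)" "xs ! i = h i" "xs ! Suc i = h (Suc i)"
        using nth[of "i - 1"] nth[of i] nth[of "Suc i"] i(2) len by simp_all
      then have e1: "(h (i - 1), h i) \<in> E" "(h (Suc i), h i) \<in> E" using i(3,4) by simp_all
      show False
      proof (cases "i \<le> a")
        case True
        have "i - 1 < a" using True i by simp
        then have "(h (Suc (i - 1)), h (i - 1)) \<in> E" by (rule bkw)
        moreover have "Suc (i - 1) = i" using i by simp
        ultimately have "(h i, h (i - 1)) \<in> E" by simp
        then show False using e1(1) two_cycle[OF ac] by blast
      next
        case False
        then show False using fwd[of i] e1 i len two_cycle[OF ac] by auto
      qed
    qed
  qed
  moreover have "hd xs = v" using nth[of 0] len f(2) unfolding h_def by (cases xs) auto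
  moreover have "last xs = w"
  proof -
    have ne: "xs \<noteq> []" using len by auto
    have "last xs = xs ! (length xs - 1)" by (rule last_conv_nth[OF ne])
    then have "last xs = xs ! (a + b)" using len by simp
    also have "\<dots> = h (a + b)" using nth[of "a+b"] by simp
    also have "\<dots> = w" using hg[of "a+b"] g(2) by simp
    finally show ?thesis .
  qed
  ultimately show ?thesis unfolding trek_between_def by blast
qed


theorem theorem2p2:
  fixes n :: nat and E :: "(nat \<times> nat) set"
  assumes "E \<subseteq> {0..<n} \<times> {0..<n}"
    and "acyclic E"
  shows "udg n E = U1 n E \<and> udg n E = U2 n E \<and> udg n E = U3 E \<and> udg n E = U4 n E"
proof -
  note E = assms(1) and ac = assms(2)
  define CA where "CA v w \<longleftrightarrow> (\<exists>c. (c, v) \<in> E\<^sup>* \<and> (c, w) \<in> E\<^sup>*)" for v w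
  have tr: "trek_between E v w \<longleftrightarrow> CA v w" for v w
    unfolding CA_def using trek_anc common_anc_trek[OF ac] by blast
  have anc: "an E v \<inter> an E w \<noteq> {} \<longleftrightarrow> CA v w" for v w
    unfolding CA_def an_def by auto
  have up: "c < n" if "(c, v) \<in> E\<^sup>*" "v < n" for c v
    using that(1) by (rule converse_rtranclE) (use that(2) E in auto)
  have down: "v < n" if "(c, v) \<in> E\<^sup>*" "c < n" for c v
    using that(1) by (rule rtranclE) (use that(2) E in auto)
  have udg: "udg n E = {{v, w} | v w. v < n \<and> w < n \<and> v \<noteq> w \<and> CA v w}"
    unfolding udg_def tr ..
  have u1: "udg n E = U1 n E" unfolding udg U1_def anc ..
  have wfE: "wf E"
  proof (rule finite_acyclic_wf[OF _ ac])
    show "finite E" by (rule finite_subset[OF E]) auto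
  qed
  have src: "\<exists>m\<in>ma E {0..<n}. (m, c) \<in> E\<^sup>*" if "c < n" for c
  proof -
    have "c \<in> {m. (m, c) \<in> E\<^sup>*}" by simp
    then obtain m where m: "m \<in> {m. (m, c) \<in> E\<^sup>*}" and mn: "\<And>y. (y, m) \<in> E \<Longrightarrow> y \<notin> {m. (m, c) \<in> E\<^sup>*}"
      using wfE_min[OF wfE] by metis
    have "\<not> (\<exists>u. (u, m) \<in> E)"
    proof
      assume "\<exists>u. (u, m) \<in> E"
      then obtain u where u: "(u,m) \<in> E" by blast
      then have "(u, c) \<in> E\<^sup>*" using m by (auto intro: converse_rtrancl_into_rtrancl)
      then show False using mn[OF u] by simp
    qed
    moreover have "m < n" using up m that by auto
    ultimately show ?thesis using m unfolding ma_def by auto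
  qed
  have c2: "(v < n \<and> w < n \<and> v \<noteq> w \<and> CA v w) \<longleftrightarrow> (\<exists>m\<in>ma E {0..<n}. v \<in> de E m \<and> w \<in> de E m \<and> v \<noteq> w)" for v w
  proof
    assume h: "v < n \<and> w < n \<and> v \<noteq> w \<and> CA v w"
    then obtain c where c: "(c,v) \<in> E\<^sup>*" "(c,w) \<in> E\<^sup>*" unfolding CA_def by blast
    have "c < n" using up c(1) h by blast
    then obtain m where "m \<in> ma E {0..<n}" "(m,c) \<in> E\<^sup>*" using src by blast
    then show "\<exists>m\<in>ma E {0..<n}. v \<in> de E m \<and> w \<in> de E m \<and> v \<noteq> w"
      using c h unfolding de_def by (meson mem_Collect_eq rtrancl_trans)
  next
    assume "\<exists>m\<in>ma E {0..<n}. v \<in> de E m \<and> w \<in> de E m \<and> v \<noteq> w"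
    then obtain m where m: "m \<in> ma E {0..<n}" "(m,v) \<in> E\<^sup>*" "(m,w) \<in> E\<^sup>*" "v \<noteq> w"
      unfolding de_def by auto
    have "m < n" using m(1) unfolding ma_def by auto
    then show "v < n \<and> w < n \<and> v \<noteq> w \<and> CA v w" using down m unfolding CA_def by blast
  qed
  have u2: "udg n E = U2 n E" unfolding udg U2_def c2 by blast
  have T: "(x, y) \<in> tc_graph (rev_graph E) \<longleftrightarrow> (y, x) \<in> E\<^sup>+" for x y
    unfolding tc_graph_def rev_graph_def trancl_converse by simp
  have TV: "x < n \<and> y < n" if "(x, y) \<in> E\<^sup>+" for x y
    using trancl_subset_Sigma[OF E] that by auto
  have irr: "(x, x) \<notin> E\<^sup>+" for x using ac unfolding acyclic_def by auto
  have c3: "(adjacent (tc_graph (rev_graph E)) v w \<or> (v \<noteq> w \<and> \<not> adjacent (tc_graph (rev_graph E)) v w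
       \<and> (\<exists>c. (v, c) \<in> tc_graph (rev_graph E) \<and> (w, c) \<in> tc_graph (rev_graph E))))
     \<longleftrightarrow> (v < n \<and> w < n \<and> v \<noteq> w \<and> CA v w)" for v w
  proof
    assume "adjacent (tc_graph (rev_graph E)) v w \<or> (v \<noteq> w \<and> \<not> adjacent (tc_graph (rev_graph E)) v w
       \<and> (\<exists>c. (v, c) \<in> tc_graph (rev_graph E) \<and> (w, c) \<in> tc_graph (rev_graph E)))"
    then consider "(w, v) \<in> E\<^sup>+" | "(v, w) \<in> E\<^sup>+" | c where "v \<noteq> w" "(c, v) \<in> E\<^sup>+" "(c, w) \<in> E\<^sup>+"
      unfolding adjacent_def T by blast
    then show "v < n \<and> w < n \<and> v \<noteq> w \<and> CA v w"
    proof cases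
      case 1 then show ?thesis using TV[OF 1] irr unfolding CA_def by (blast intro: trancl_into_rtrancl)
    next
      case 2 then show ?thesis using TV[OF 2] irr unfolding CA_def by (blast intro: trancl_into_rtrancl)
    next
      case 3 then show ?thesis using TV[OF 3(2)] TV[OF 3(3)] unfolding CA_def by (blast intro: trancl_into_rtrancl)
    qed
  next
    assume h: "v < n \<and> w < n \<and> v \<noteq> w \<and> CA v w"
    then obtain c where c: "(c,v) \<in> E\<^sup>*" "(c,w) \<in> E\<^sup>*" unfolding CA_def by blast
    show "adjacent (tc_graph (rev_graph E)) v w \<or> (v \<noteq> w \<and> \<not> adjacent (tc_graph (rev_graph E)) v w
       \<and> (\<exists>c. (v, c) \<in> tc_graph (rev_graph E) \<and> (w, c) \<in> tc_graph (rev_graph E)))"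
    proof (cases "c = v")
      case True
      then have "(v, w) \<in> E\<^sup>+" using c(2) h by (auto simp: rtrancl_eq_or_trancl)
      then show ?thesis unfolding adjacent_def T by blast
    next
      case False
      note F1 = False
      show ?thesis
      proof (cases "c = w")
        case True
        then have "(w, v) \<in> E\<^sup>+" using c(1) h by (auto simp: rtrancl_eq_or_trancl)
        then show ?thesis unfolding adjacent_def T by blast
      next
        case False
        then have "(c, v) \<in> E\<^sup>+" "(c, w) \<in> E\<^sup>+" using F1 c by (auto simp: rtrancl_eq_or_trancl)
        then show ?thesis using h unfolding adjacent_def T by blast
      qed
    qed
  qed
  have u3: "udg n E = U3 E" unfolding udg U3_def moral_def c3 ..
  define M where "M = mmult n (mtranspose (Tmat n E)) (Tmat n E)"
  have Mz: "M v w \<noteq> 0 \<longleftrightarrow> CA v w" if v: "v < n" for v w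
  proof -
    have "M v w = (\<Sum>k<n. Tmat n E k v * Tmat n E k w)"
      unfolding M_def mmult_def mtranspose_def by simp
    also have "\<dots> \<noteq> 0 \<longleftrightarrow> (\<exists>k<n. Tmat n E k v * Tmat n E k w \<noteq> 0)"
      by (subst sum_nonneg_eq_0_iff) (auto simp: Tmat_nonneg)
    also have "\<dots> \<longleftrightarrow> (\<exists>k<n. (k, v) \<in> E\<^sup>* \<and> (k, w) \<in> E\<^sup>*)"
      using Tmat_pos[OF E ac] by auto
    also have "\<dots> \<longleftrightarrow> CA v w" unfolding CA_def using up v by blast
    finally show ?thesis .
  qed
  have c4: "(v < n \<and> w < n \<and> amat M v w = 1) \<longleftrightarrow> (v < n \<and> w < n \<and> v \<noteq> w \<and> CA v w)" for v w
    using Mz[of v w] unfolding amat_def by auto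
  have u4: "udg n E = U4 n E" unfolding udg U4_def graph_of_matrix_def M_def[symmetric] c4 ..
  show ?thesis using u1 u2 u3 u4 by blast
qed

end
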